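(* Let $K^1,K^2$, $\Theta^1,\Theta^2$, $\tau^1,\tau^2$, $\eta^{\{1,2\}}$ and the deterministic functions $\Lambda^{1},\Lambda^{2},\Lambda^{\{1,2\}}$ be as described in the context. Then for all $t_1,t_2,t$ with $0\le t\le \min(t_1,t_2)$, $$ \mathbb P(\tau^1>t_1,\tau^2>t_2\mid\mathcal F_t)= \begin{cases} \exp\left\{-\Lambda^{2}_{t_2}-\left(\Lambda^{\{1,2\}}_{t_1}-\Lambda^{2}_{t_1}\right)\right\}\eta^{\{1,2\}}_t, & \text{if } t_1\le t_2,\\[2pt] \exp\left\{-\Lambda^{1}_{t_1}-\left(\Lambda^{\{1,2\}}_{t_2}-\Lambda^{1}_{t_2}\right)\right\}\eta^{\{1,2\}}_t, & \text{if } t_2< t_1. \end{cases} $$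
   Context: Let $(\Omega,\mathcal G,\mathbb F,\mathbb P)$ be a filtered probability space, $\mathbb F=(\mathcal F_t)_{t\ge0}$ satisfying the usual conditions. For $i=1,2$, let $K^i$ be an $\mathbb F$-adapted, càdlàg, increasing process with $K^i_0=0$ (the processes $K^1,K^2$ may be dependent), and let $\Theta^1,\Theta^2$ be unit exponential random variables, independent of each other and of $\mathcal F_\infty$. Define $\tau^i:=\inf\{t\ge0: K^i_t\ge\Theta^i\}$, so that $\mathbb P(\tau^i>t\mid\mathcal F_t)=e^{-K^i_t}$. Put $K^{\{1,2\}}:=K^1+K^2$. For $J\in\{\{1\},\{2\},\{1,2\}\}$ (writing $K^{\{i\}}=K^i$), let $K^{J,c}$ be the continuous part of $K^J$, let $I^J_t:=\sum_{s\le t}(1-e^{-\Delta K^J_s})$ with canonical decomposition $I^J=M^{I^J}+A^{I^J}$ ($M^{I^J}$ an $\mathbb F$-local martingale, $A^{I^J}$ $\mathbb F$-predictable of finite variation), and set $\Lambda^J:=K^{J,c}+A^{I^J}$. Standing assumptions: for each such $J$, $K^{J,c}$ and $A^{I^J}$ are deterministic, $\Lambda^J$ is continuous (as holds when the associated random times are totally inaccessible), and the multiplicative decomposition $e^{-K^J_t}=\eta^J_t e^{-\Lambda^J_t}$ holds with $\eta^J$ a nonnegative $\mathbb F$-martingale with $\eta^J_0=1$. Here $\Lambda^{i}:=\Lambda^{\{i\}}$, $\eta^i:=\eta^{\{i\}}$. *)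

theory Defs
  imports "HOL-Probability.Probability"
begin

definition usual_filtration :: "'a measure \<Rightarrow> (real \<Rightarrow> 'a measure) \<Rightarrow> bool" where
  "usual_filtration M F \<longleftrightarrow>
     (\<forall>t\<ge>0. subalgebra M (F t)) \<and>
     (\<forall>s t. 0 \<le> s \<longrightarrow> s \<le> t \<longrightarrow> sets (F s) \<subseteq> sets (F t)) \<and>
     (\<forall>t\<ge>0. sets (F t) = (\<Inter>s\<in>{t<..}. sets (F s))) \<and>
     null_sets M \<subseteq> sets (F 0)"

definition F_infty :: "'a measure \<Rightarrow> (real \<Rightarrow> 'a measure) \<Rightarrow> 'a set set" where
  "F_infty M F = sigma_sets (space M) (\<Union>t\<in>{0..}. sets (F t))"

definition adapted :: "(real \<Rightarrow> 'a measure) \<Rightarrow> (real \<Rightarrow> 'a \<Rightarrow> real) \<Rightarrow> bool" where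
  "adapted F X \<longleftrightarrow> (\<forall>t\<ge>0. X t \<in> borel_measurable (F t))"

definition cadlag_increasing_from_0 :: "'a measure \<Rightarrow> (real \<Rightarrow> 'a \<Rightarrow> real) \<Rightarrow> bool" where
  "cadlag_increasing_from_0 M X \<longleftrightarrow>
     (\<forall>\<omega>\<in>space M.
        X 0 \<omega> = 0 \<and>
        (\<forall>s t. 0 \<le> s \<longrightarrow> s \<le> t \<longrightarrow> X s \<omega> \<le> X t \<omega>) \<and>
        (\<forall>t\<ge>0. ((\<lambda>s. X s \<omega>) \<longlongrightarrow> X t \<omega>) (at_right t)) \<and>
        (\<forall>t>0. \<exists>l. ((\<lambda>s. X s \<omega>) \<longlongrightarrow> l) (at_left t)))"

definition martingale :: "'a measure \<Rightarrow> (real \<Rightarrow> 'a measure) \<Rightarrow> (real \<Rightarrow> 'a \<Rightarrow> real) \<Rightarrow> bool" where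
  "martingale M F X \<longleftrightarrow> adapted F X \<and> (\<forall>t\<ge>0. integrable M (X t)) \<and>
     (\<forall>s t. 0 \<le> s \<longrightarrow> s \<le> t \<longrightarrow> (AE \<omega> in M. real_cond_exp M (F s) (X t) \<omega> = X s \<omega>))"

text \<open>Canonical construction tau = inf {t >= 0 : K_t >= Theta}, valued in the extended
  reals (tau = oo if the set is empty).\<close>
definition hit_time :: "(real \<Rightarrow> 'a \<Rightarrow> real) \<Rightarrow> ('a \<Rightarrow> real) \<Rightarrow> 'a \<Rightarrow> ereal" where
  "hit_time K \<Theta> \<omega> = Inf {ereal t | t. 0 \<le> t \<and> \<Theta> \<omega> \<le> K t \<omega>}"

definition mult_decomp ::
  "'a measure \<Rightarrow> (real \<Rightarrow> 'a measure) \<Rightarrow> (real \<Rightarrow> 'a \<Rightarrow> real) \<Rightarrow> (real \<Rightarrow> real) \<Rightarrow> (real \<Rightarrow> 'a \<Rightarrow> real) \<Rightarrow> bool" where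
  "mult_decomp M F K \<Lambda> \<eta> \<longleftrightarrow>
     continuous_on {0..} \<Lambda> \<and>
     martingale M F \<eta> \<and>
     (\<forall>t\<ge>0. \<forall>\<omega>\<in>space M. 0 \<le> \<eta> t \<omega>) \<and>
     (\<forall>\<omega>\<in>space M. \<eta> 0 \<omega> = 1) \<and>
     (AE \<omega> in M. \<forall>t\<ge>0. exp (- K t \<omega>) = \<eta> t \<omega> * exp (- \<Lambda> t))"

end

theory Submission
  imports Defs
begin

lemma indep_exp:
  fixes g X \<Theta> :: "'a \<Rightarrow> real"
  assumes P: "prob_space M"
  and sub: "subalgebra M N"
  and D: "distributed M lborel \<Theta> (exponential_density 1)"
  and ind: "prob_space.indep_set M (sets N) {\<Theta> -` A \<inter> space M | A. A \<in> sets borel}"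
  and gm: "g \<in> borel_measurable N" and Xm: "X \<in> borel_measurable N"
  and nonneg: "\<And>\<omega>. \<omega> \<in> space M \<Longrightarrow> 0 \<le> g \<omega> \<and> 0 \<le> X \<omega>"
  shows "(\<integral>\<^sup>+\<omega>. ennreal (g \<omega> * indicator {\<omega> \<in> space M. X \<omega> < \<Theta> \<omega>} \<omega>) \<partial>M)
       = (\<integral>\<^sup>+\<omega>. ennreal (g \<omega> * exp (- X \<omega>)) \<partial>M)"
proof -
  interpret prob_space M by (rule P)
  let ?S = "borel \<Otimes>\<^sub>M borel :: (real \<times> real) measure"
  define V where "V = (\<lambda>\<omega>. (g \<omega>, X \<omega>))"
  have VN: "V \<in> measurable N ?S" unfolding V_def using gm Xm by measurable
  have VM[measurable]: "V \<in> measurable M ?S" by (rule measurable_from_subalg[OF sub VN])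
  have TM[measurable]: "\<Theta> \<in> borel_measurable M"
    using distributed_measurable[OF D] by (simp cong: measurable_cong_sets)
  have gM[measurable]: "g \<in> borel_measurable M" by (rule measurable_from_subalg[OF sub gm])
  have XM[measurable]: "X \<in> borel_measurable M" by (rule measurable_from_subalg[OF sub Xm])
  have sN: "sets N \<subseteq> sets M" "space N = space M" using sub unfolding subalgebra_def by auto
  have is1: "Int_stable (sets N)" unfolding Int_stable_def by auto
  have is2: "Int_stable {\<Theta> -` A \<inter> space M | A. A \<in> sets borel}"
    unfolding Int_stable_def by (auto) (metis Int_assoc Int_left_commute Int_absorb vimage_Int sets.Int)
  have ind2: "indep_set (sigma_sets (space M) (sets N)) (sigma_sets (space M) {\<Theta> -` A \<inter> space M | A. A \<in> sets borel})"
    by (rule indep_set_sigma_sets[OF ind is1 is2])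
  have sub1: "sigma_sets (space M) {V -` A \<inter> space M | A. A \<in> sets ?S} \<subseteq> sigma_sets (space M) (sets N)"
  proof (rule sigma_sets_mono)
    show "{V -` A \<inter> space M | A. A \<in> sets ?S} \<subseteq> sigma_sets (space M) (sets N)"
      using VN sN by (auto intro!: sigma_sets.Basic dest: measurable_sets)
  qed
  define W where "W = (\<lambda>\<omega>. (\<Theta> \<omega>, 0::real))"
  have WM[measurable]: "W \<in> measurable M ?S" unfolding W_def by measurable
  have sub2: "sigma_sets (space M) {W -` A \<inter> space M | A. A \<in> sets ?S} \<subseteq> sigma_sets (space M) {\<Theta> -` A \<inter> space M | A. A \<in> sets borel}"
  proof (rule sigma_sets_mono, safe)
    fix A assume A: "A \<in> sets ?S"
    have m: "(\<lambda>\<theta>::real. (\<theta>, 0::real)) \<in> measurable borel ?S" by measurable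
    have "W -` A \<inter> space M = \<Theta> -` ((\<lambda>\<theta>::real. (\<theta>, 0::real)) -` A \<inter> space borel) \<inter> space M"
      unfolding W_def by auto
    moreover have "(\<lambda>\<theta>::real. (\<theta>, 0::real)) -` A \<inter> space borel \<in> sets borel"
      using measurable_sets[OF m A] .
    ultimately show "W -` A \<inter> space M \<in> sigma_sets (space M) {\<Theta> -` A \<inter> space M | A. A \<in> sets borel}"
      by (auto intro!: sigma_sets.Basic)
  qed
  have "indep_set (sigma_sets (space M) {V -` A \<inter> space M | A. A \<in> sets ?S})
                  (sigma_sets (space M) {W -` A \<inter> space M | A. A \<in> sets ?S})"
    using ind2 sub1 sub2 unfolding indep_set_def
    by (intro indep_sets_mono_sets[OF ind2[unfolded indep_set_def]]) (auto split: bool.split)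
  then have iv: "indep_var ?S V ?S W"
    unfolding indep_var_eq using VM WM by auto
  have deq: "distr M ?S V \<Otimes>\<^sub>M distr M ?S W = distr M (?S \<Otimes>\<^sub>M ?S) (\<lambda>x. (V x, W x))"
    using iv unfolding indep_var_distribution_eq by auto
  interpret D2: prob_space "distr M ?S W" by (rule prob_space_distr) simp
  define f where "f = (\<lambda>p :: (real \<times> real) \<times> (real \<times> real). ennreal (fst (fst p) * (if snd (fst p) < fst (snd p) then 1 else 0)))"
  have fm[measurable]: "f \<in> borel_measurable (?S \<Otimes>\<^sub>M ?S)" unfolding f_def by measurable
  have "(\<integral>\<^sup>+\<omega>. ennreal (g \<omega> * indicator {\<omega> \<in> space M. X \<omega> < \<Theta> \<omega>} \<omega>) \<partial>M)
      = (\<integral>\<^sup>+\<omega>. f (V \<omega>, W \<omega>) \<partial>M)"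
    by (intro nn_integral_cong) (auto simp: f_def V_def W_def indicator_def)
  also have "\<dots> = (\<integral>\<^sup>+p. f p \<partial>distr M (?S \<Otimes>\<^sub>M ?S) (\<lambda>x. (V x, W x)))"
    by (subst nn_integral_distr) auto
  also have "\<dots> = (\<integral>\<^sup>+p. f p \<partial>(distr M ?S V \<Otimes>\<^sub>M distr M ?S W))"
    by (simp add: deq)
  also have "\<dots> = (\<integral>\<^sup>+q. (\<integral>\<^sup>+\<theta>. f (q, \<theta>) \<partial>distr M ?S W) \<partial>distr M ?S V)"
    by (rule D2.nn_integral_fst[symmetric]) (simp add: fm cong: measurable_cong_sets)
  also have "\<dots> = (\<integral>\<^sup>+\<omega>. (\<integral>\<^sup>+\<theta>. f (V \<omega>, \<theta>) \<partial>distr M ?S W) \<partial>M)"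
  proof -
    have "f \<in> borel_measurable (?S \<Otimes>\<^sub>M distr M ?S W)"
      using fm by (simp cong: measurable_cong_sets)
    then have mm: "(\<lambda>q. \<integral>\<^sup>+\<theta>. f (q, \<theta>) \<partial>distr M ?S W) \<in> borel_measurable ?S"
      by (rule D2.borel_measurable_nn_integral_fst)
    show ?thesis by (rule nn_integral_distr[OF VM]) (simp add: mm cong: measurable_cong_sets)
  qed
  also have "\<dots> = (\<integral>\<^sup>+\<omega>. ennreal (g \<omega> * exp (- X \<omega>)) \<partial>M)"
  proof (intro nn_integral_cong)
    fix \<omega> assume w: "\<omega> \<in> space M"
    have "(\<integral>\<^sup>+\<theta>. f (V \<omega>, \<theta>) \<partial>distr M ?S W) = (\<integral>\<^sup>+\<omega>'. f (V \<omega>, W \<omega>') \<partial>M)"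
      by (subst nn_integral_distr) (auto simp: f_def V_def)
    also have "\<dots> = (\<integral>\<^sup>+\<omega>'. ennreal (g \<omega>) * indicator {\<omega>' \<in> space M. X \<omega> < \<Theta> \<omega>'} \<omega>' \<partial>M)"
      using nonneg[OF w]
      by (intro nn_integral_cong) (auto simp: f_def V_def W_def indicator_def)
    also have "\<dots> = ennreal (g \<omega>) * emeasure M {\<omega>' \<in> space M. X \<omega> < \<Theta> \<omega>'}"
      by (subst nn_integral_cmult_indicator) auto
    also have "\<dots> = ennreal (g \<omega>) * ennreal (exp (- X \<omega>))"
      using exponential_distributedD_gt[OF D, of "X \<omega>"] nonneg[OF w]
      by (simp add: emeasure_eq_measure)
    also have "\<dots> = ennreal (g \<omega> * exp (- X \<omega>))"
      using nonneg[OF w] by (simp add: ennreal_mult)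
    finally show "(\<integral>\<^sup>+\<theta>. f (V \<omega>, \<theta>) \<partial>distr M ?S W) = ennreal (g \<omega> * exp (- X \<omega>))" .
  qed
  finally show ?thesis .
qed

lemma hit_gt:
  fixes K :: "real \<Rightarrow> 'a \<Rightarrow> real"
  assumes mono: "\<And>s t. 0 \<le> s \<Longrightarrow> s \<le> t \<Longrightarrow> K s \<omega> \<le> K t \<omega>"
    and rc: "((\<lambda>s. K s \<omega>) \<longlongrightarrow> K t1 \<omega>) (at_right t1)"
    and t1: "0 \<le> t1"
  shows "hit_time K \<Theta> \<omega> > ereal t1 \<longleftrightarrow> K t1 \<omega> < \<Theta> \<omega>"
proof
  assume h: "hit_time K \<Theta> \<omega> > ereal t1"
  show "K t1 \<omega> < \<Theta> \<omega>"
  proof (rule ccontr)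
    assume "\<not> K t1 \<omega> < \<Theta> \<omega>"
    then have "ereal t1 \<in> {ereal t | t. 0 \<le> t \<and> \<Theta> \<omega> \<le> K t \<omega>}" using t1 by auto
    then have "hit_time K \<Theta> \<omega> \<le> ereal t1" unfolding hit_time_def by (rule Inf_lower)
    with h show False by simp
  qed
next
  assume lt: "K t1 \<omega> < \<Theta> \<omega>"
  have "eventually (\<lambda>s. K s \<omega> < \<Theta> \<omega>) (at_right t1)"
    using order_tendstoD(2)[OF rc lt] .
  then obtain b where b: "b > t1" and bb: "\<And>y. y > t1 \<Longrightarrow> y < b \<Longrightarrow> K y \<omega> < \<Theta> \<omega>"
    unfolding eventually_at_right[OF gt_ex[of t1, THEN someI_ex]] 
    by (metis eventually_at_right_field)
  have "ereal b \<le> hit_time K \<Theta> \<omega>"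
    unfolding hit_time_def
  proof (rule Inf_greatest, safe)
    fix s assume s: "0 \<le> s" "\<Theta> \<omega> \<le> K s \<omega>"
    show "ereal b \<le> ereal s"
    proof (rule ccontr)
      assume "\<not> ereal b \<le> ereal s"
      then have sb: "s < b" by simp
      show False
      proof (cases "s \<le> t1")
        case True
        then have "K s \<omega> \<le> K t1 \<omega>" using mono s by auto
        then show False using s lt by simp
      next
        case False
        then show False using bb[of s] sb s by simp
      qed
    qed
  qed
  moreover have "ereal t1 < ereal b" using b by simp
  ultimately show "hit_time K \<Theta> \<omega> > ereal t1"
    using less_le_trans by blast
qed

lemma sfs:
  assumes "prob_space M" "subalgebra M N"
  shows "sigma_finite_subalgebra M N"
  by (rule finite_measure_subalgebra_is_sigma_finite)
     (simp add: finite_measure_subalgebra_def finite_measure_subalgebra_axioms_def assms prob_space.finite_measure[OF assms(1)])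

lemma mart_part:
  fixes Ka Kb :: "real \<Rightarrow> 'a \<Rightarrow> real"
  assumes P: "prob_space M"
    and UF: "usual_filtration M F"
    and Kaa: "Ka a \<in> borel_measurable M" and Kba: "Kb a \<in> borel_measurable M" and Kbb: "Kb b \<in> borel_measurable M"
    and nn: "\<And>\<omega>. \<omega> \<in> space M \<Longrightarrow> 0 \<le> Ka a \<omega> + Kb b \<omega>"
    and Db: "mult_decomp M F Kb \<Lambda>b \<eta>b"
    and D12: "mult_decomp M F (\<lambda>s \<omega>. Ka s \<omega> + Kb s \<omega>) \<Lambda>12 \<eta>12"
    and t: "0 \<le> t" "t \<le> a" "a \<le> b"
    and G: "G \<in> sets (F t)"
  shows "(\<integral>\<omega>. indicator G \<omega> * exp (- Ka a \<omega> - Kb b \<omega>) \<partial>M)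
       = exp (- \<Lambda>b b - (\<Lambda>12 a - \<Lambda>b a)) * (\<integral>\<omega>. indicator G \<omega> * \<eta>12 t \<omega> \<partial>M)"
proof -
  interpret prob_space M by (rule P)
  have sub: "\<And>s. 0 \<le> s \<Longrightarrow> subalgebra M (F s)" using UF unfolding usual_filtration_def by blast
  have monoF: "\<And>s r. 0 \<le> s \<Longrightarrow> s \<le> r \<Longrightarrow> sets (F s) \<subseteq> sets (F r)" using UF unfolding usual_filtration_def by blast
  have a0: "0 \<le> a" "0 \<le> b" using t by auto
  have mb: "martingale M F \<eta>b" and m12: "martingale M F \<eta>12"
    using Db D12 unfolding mult_decomp_def by auto
  have ae_b: "AE \<omega> in M. \<forall>s\<ge>0. exp (- Kb s \<omega>) = \<eta>b s \<omega> * exp (- \<Lambda>b s)"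
    using Db unfolding mult_decomp_def by auto
  have ae_12: "AE \<omega> in M. \<forall>s\<ge>0. exp (- (Ka s \<omega> + Kb s \<omega>)) = \<eta>12 s \<omega> * exp (- \<Lambda>12 s)"
    using D12 unfolding mult_decomp_def by auto
  have adb: "\<And>s. 0 \<le> s \<Longrightarrow> \<eta>b s \<in> borel_measurable (F s)" using mb unfolding martingale_def adapted_def by auto
  have ad12: "\<And>s. 0 \<le> s \<Longrightarrow> \<eta>12 s \<in> borel_measurable (F s)" using m12 unfolding martingale_def adapted_def by auto
  have intb: "\<And>s. 0 \<le> s \<Longrightarrow> integrable M (\<eta>b s)" using mb unfolding martingale_def by auto
  have int12: "\<And>s. 0 \<le> s \<Longrightarrow> integrable M (\<eta>12 s)" using m12 unfolding martingale_def by auto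
  have ceb: "AE \<omega> in M. real_cond_exp M (F a) (\<eta>b b) \<omega> = \<eta>b a \<omega>"
    using mb a0 t unfolding martingale_def by (meson conjunct2)
  have ce12: "AE \<omega> in M. real_cond_exp M (F t) (\<eta>12 a) \<omega> = \<eta>12 t \<omega>"
    using m12 a0 t unfolding martingale_def by (meson conjunct2)
  have Ga: "G \<in> sets (F a)" using monoF[OF t(1) t(2)] G by auto
  have GM: "G \<in> sets M" using sub[OF t(1)] G unfolding subalgebra_def by auto
  define c where "c = exp (- \<Lambda>b b - (\<Lambda>12 a - \<Lambda>b a))"
  define h where "h = (\<lambda>\<omega>. indicator G \<omega> * \<eta>12 a \<omega> / \<eta>b a \<omega>)"
  have hF[measurable]: "h \<in> borel_measurable (F a)"
    unfolding h_def using Ga ad12[OF a0(1)] adb[OF a0(1)] by measurable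
  have hM[measurable]: "h \<in> borel_measurable M" by (rule measurable_from_subalg[OF sub[OF a0(1)] hF])
  have ebbM[measurable]: "\<eta>b b \<in> borel_measurable M" using intb[OF a0(2)] by auto
  have ebaM[measurable]: "\<eta>b a \<in> borel_measurable M" using intb[OF a0(1)] by auto
  have e12aM[measurable]: "\<eta>12 a \<in> borel_measurable M" using int12[OF a0(1)] by auto
  have e12tM[measurable]: "\<eta>12 t \<in> borel_measurable M" using int12[OF t(1)] by auto
  have [measurable]: "Ka a \<in> borel_measurable M" "Kb a \<in> borel_measurable M" "Kb b \<in> borel_measurable M"
    using Kaa Kba Kbb by auto
  have [measurable]: "G \<in> sets M" by (rule GM)
  have Zeq: "AE \<omega> in M. indicator G \<omega> * exp (- Ka a \<omega> - Kb b \<omega>) = c * (h \<omega> * \<eta>b b \<omega>)"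
    and pos: "AE \<omega> in M. \<eta>b a \<omega> > 0"
  proof -
    { fix \<omega> assume h1: "\<forall>s\<ge>0. exp (- Kb s \<omega>) = \<eta>b s \<omega> * exp (- \<Lambda>b s)"
        and h2: "\<forall>s\<ge>0. exp (- (Ka s \<omega> + Kb s \<omega>)) = \<eta>12 s \<omega> * exp (- \<Lambda>12 s)"
      have e1: "\<eta>b a \<omega> = exp (- Kb a \<omega> + \<Lambda>b a)"
      proof -
        have q: "exp (- Kb a \<omega>) = \<eta>b a \<omega> * exp (- \<Lambda>b a)"
          using h1 a0 by blast
        have "\<eta>b a \<omega> = exp (- Kb a \<omega>) / exp (- \<Lambda>b a)"
          using q by (simp add: eq_divide_eq)
        then show ?thesis by (simp add: exp_diff[symmetric])
      qed
      have e2: "\<eta>b b \<omega> = exp (- Kb b \<omega> + \<Lambda>b b)"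
      proof -
        have q: "exp (- Kb b \<omega>) = \<eta>b b \<omega> * exp (- \<Lambda>b b)"
          using h1 a0 by blast
        have "\<eta>b b \<omega> = exp (- Kb b \<omega>) / exp (- \<Lambda>b b)"
          using q by (simp add: eq_divide_eq)
        then show ?thesis by (simp add: exp_diff[symmetric])
      qed
      have e3: "\<eta>12 a \<omega> = exp (- (Ka a \<omega> + Kb a \<omega>) + \<Lambda>12 a)"
      proof -
        have q: "exp (- (Ka a \<omega> + Kb a \<omega>)) = \<eta>12 a \<omega> * exp (- \<Lambda>12 a)"
          using h2 a0 by blast
        have "\<eta>12 a \<omega> = exp (- (Ka a \<omega> + Kb a \<omega>)) / exp (- \<Lambda>12 a)"
          using q by (simp add: eq_divide_eq)
        then show ?thesis by (simp add: exp_diff[symmetric])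
      qed
      have "indicator G \<omega> * exp (- Ka a \<omega> - Kb b \<omega>) = c * (h \<omega> * \<eta>b b \<omega>)"
      proof -
        define A where "A = - (Ka a \<omega> + Kb a \<omega>) + \<Lambda>12 a"
        define B where "B = - Kb a \<omega> + \<Lambda>b a"
        define C where "C = - Kb b \<omega> + \<Lambda>b b"
        define c' where "c' = - \<Lambda>b b - (\<Lambda>12 a - \<Lambda>b a)"
        have 1: "exp A / exp B * exp C = exp (A - B + C)" by (simp only: exp_add exp_diff)
        have 2: "exp c' * exp (A - B + C) = exp (- Ka a \<omega> - Kb b \<omega>)"
          unfolding mult_exp_exp by (rule arg_cong[where f=exp]) (simp add: A_def B_def C_def c'_def algebra_simps)
        have "c * (h \<omega> * \<eta>b b \<omega>) = indicator G \<omega> * (exp c' * (exp A / exp B * exp C))"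
          unfolding h_def c_def e1 e2 e3 A_def B_def C_def c'_def by simp
        also have "\<dots> = indicator G \<omega> * exp (- Ka a \<omega> - Kb b \<omega>)" unfolding 1 2 ..
        finally show ?thesis by simp
      qed
      moreover have "\<eta>b a \<omega> > 0" using e1 by simp
      ultimately have "indicator G \<omega> * exp (- Ka a \<omega> - Kb b \<omega>) = c * (h \<omega> * \<eta>b b \<omega>) \<and> \<eta>b a \<omega> > 0" by blast }
    note * = this
    show "AE \<omega> in M. indicator G \<omega> * exp (- Ka a \<omega> - Kb b \<omega>) = c * (h \<omega> * \<eta>b b \<omega>)"
      using ae_b ae_12 by eventually_elim (use * in blast)
    show "AE \<omega> in M. \<eta>b a \<omega> > 0"
      using ae_b ae_12 by eventually_elim (use * in blast)
  qed
  have intZ: "integrable M (\<lambda>\<omega>. indicator G \<omega> * exp (- Ka a \<omega> - Kb b \<omega>))"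
  proof (rule integrable_const_bound[where B=1])
    show "AE \<omega> in M. norm (indicator G \<omega> * exp (- Ka a \<omega> - Kb b \<omega>)) \<le> 1"
    proof (rule AE_I2)
      fix \<omega> assume "\<omega> \<in> space M"
      then have "0 \<le> Ka a \<omega> + Kb b \<omega>" by (rule nn)
      then show "norm (indicator G \<omega> * exp (- Ka a \<omega> - Kb b \<omega>)) \<le> (1::real)"
        by (auto simp: indicator_def)
    qed
  qed measurable
  have cpos: "c > 0" unfolding c_def by simp
  have "integrable M (\<lambda>\<omega>. c * (h \<omega> * \<eta>b b \<omega>))"
    using intZ by (subst integrable_cong_AE[OF _ _ Zeq[THEN AE_symmetric]]) auto
  then have inthb: "integrable M (\<lambda>\<omega>. h \<omega> * \<eta>b b \<omega>)"
    using cpos by simp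
  interpret Sa: sigma_finite_subalgebra M "F a" by (rule sfs[OF P sub[OF a0(1)]])
  interpret St: sigma_finite_subalgebra M "F t" by (rule sfs[OF P sub[OF t(1)]])
  have "(\<integral>\<omega>. indicator G \<omega> * exp (- Ka a \<omega> - Kb b \<omega>) \<partial>M) = (\<integral>\<omega>. c * (h \<omega> * \<eta>b b \<omega>) \<partial>M)"
    by (rule integral_cong_AE[OF _ _ Zeq]) auto
  also have "\<dots> = c * (\<integral>\<omega>. h \<omega> * \<eta>b b \<omega> \<partial>M)" by simp
  also have "(\<integral>\<omega>. h \<omega> * \<eta>b b \<omega> \<partial>M) = (\<integral>\<omega>. h \<omega> * real_cond_exp M (F a) (\<eta>b b) \<omega> \<partial>M)"
    by (rule Sa.real_cond_exp_intg(2)[symmetric, OF inthb hF ebbM])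
  also have "\<dots> = (\<integral>\<omega>. h \<omega> * \<eta>b a \<omega> \<partial>M)"
    by (rule integral_cong_AE) (use ceb in auto)
  also have "\<dots> = (\<integral>\<omega>. indicator G \<omega> * \<eta>12 a \<omega> \<partial>M)"
    by (rule integral_cong_AE) (use pos in \<open>auto simp: h_def\<close>)
  also have "\<dots> = (\<integral>\<omega>. indicator G \<omega> * real_cond_exp M (F t) (\<eta>12 a) \<omega> \<partial>M)"
  proof (rule St.real_cond_exp_intg(2)[symmetric])
    show "integrable M (\<lambda>\<omega>. indicator G \<omega> * \<eta>12 a \<omega>)"
      using integrable_real_mult_indicator[OF GM int12[OF a0(1)]] by (simp add: mult.commute)
    show "indicator G \<in> borel_measurable (F t)" using G by measurable
  qed measurable
  also have "\<dots> = (\<integral>\<omega>. indicator G \<omega> * \<eta>12 t \<omega> \<partial>M)"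
    by (rule integral_cong_AE) (use ce12 in auto)
  finally show ?thesis unfolding c_def by simp
qed

theorem theorem3p1:
  fixes M :: "'a measure" and F :: "real \<Rightarrow> 'a measure"
    and K1 K2 :: "real \<Rightarrow> 'a \<Rightarrow> real" and \<Theta>1 \<Theta>2 :: "'a \<Rightarrow> real"
    and \<Lambda>1 \<Lambda>2 \<Lambda>12 :: "real \<Rightarrow> real" and \<eta>1 \<eta>2 \<eta>12 :: "real \<Rightarrow> 'a \<Rightarrow> real"
    and t1 t2 t :: real
  assumes "prob_space M"
    and "usual_filtration M F"
    and "adapted F K1" and "adapted F K2"
    and "cadlag_increasing_from_0 M K1" and "cadlag_increasing_from_0 M K2"
    and "distributed M lborel \<Theta>1 (exponential_density 1)"
    and "distributed M lborel \<Theta>2 (exponential_density 1)"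
    and "prob_space.indep_sets M
           (\<lambda>i::nat. if i = 0 then F_infty M F
                     else if i = 1 then {\<Theta>1 -` A \<inter> space M | A. A \<in> sets borel}
                     else {\<Theta>2 -` A \<inter> space M | A. A \<in> sets borel}) {0, 1, 2}"
    and "mult_decomp M F K1 \<Lambda>1 \<eta>1"
    and "mult_decomp M F K2 \<Lambda>2 \<eta>2"
    and "mult_decomp M F (\<lambda>s \<omega>. K1 s \<omega> + K2 s \<omega>) \<Lambda>12 \<eta>12"
    and "0 \<le> t" and "t \<le> min t1 t2"
  shows "AE \<omega> in M.
           real_cond_exp M (F t)
             (indicator {x \<in> space M. hit_time K1 \<Theta>1 x > ereal t1 \<and> hit_time K2 \<Theta>2 x > ereal t2}) \<omega>
           = (if t1 \<le> t2
              then exp (- \<Lambda>2 t2 - (\<Lambda>12 t1 - \<Lambda>2 t1)) * \<eta>12 t \<omega>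
              else exp (- \<Lambda>1 t1 - (\<Lambda>12 t2 - \<Lambda>1 t2)) * \<eta>12 t \<omega>)"
proof -
  note P = assms(1) and UF = assms(2) and ad1 = assms(3) and ad2 = assms(4)
    and c1 = assms(5) and c2 = assms(6) and D1 = assms(7) and D2 = assms(8) and ind = assms(9)
    and MD1 = assms(10) and MD2 = assms(11) and MD12 = assms(12) and t0 = assms(13) and tm = assms(14)
  interpret prob_space M by (rule P)
  have sub: "\<And>s. 0 \<le> s \<Longrightarrow> subalgebra M (F s)" using UF unfolding usual_filtration_def by blast
  have tt: "0 \<le> t1" "0 \<le> t2" "t \<le> t1" "t \<le> t2" using t0 tm by auto
  have K1F: "\<And>s. 0 \<le> s \<Longrightarrow> K1 s \<in> borel_measurable (F s)" using ad1 unfolding adapted_def by blast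
  have K2F: "\<And>s. 0 \<le> s \<Longrightarrow> K2 s \<in> borel_measurable (F s)" using ad2 unfolding adapted_def by blast
  have K1M[measurable]: "K1 t1 \<in> borel_measurable M" "K1 t2 \<in> borel_measurable M"
    using measurable_from_subalg[OF sub K1F] tt by auto
  have K2M[measurable]: "K2 t1 \<in> borel_measurable M" "K2 t2 \<in> borel_measurable M"
    using measurable_from_subalg[OF sub K2F] tt by auto
  have T1M[measurable]: "\<Theta>1 \<in> borel_measurable M"
    using distributed_measurable[OF D1] by (simp cong: measurable_cong_sets)
  have T2M[measurable]: "\<Theta>2 \<in> borel_measurable M"
    using distributed_measurable[OF D2] by (simp cong: measurable_cong_sets)
  have path1: "\<And>\<omega>. \<omega> \<in> space M \<Longrightarrow> K1 0 \<omega> = 0 \<and> (\<forall>s t. 0 \<le> s \<longrightarrow> s \<le> t \<longrightarrow> K1 s \<omega> \<le> K1 t \<omega>) \<and>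
        (\<forall>t\<ge>0. ((\<lambda>s. K1 s \<omega>) \<longlongrightarrow> K1 t \<omega>) (at_right t))"
    using c1 unfolding cadlag_increasing_from_0_def by blast
  have path2: "\<And>\<omega>. \<omega> \<in> space M \<Longrightarrow> K2 0 \<omega> = 0 \<and> (\<forall>s t. 0 \<le> s \<longrightarrow> s \<le> t \<longrightarrow> K2 s \<omega> \<le> K2 t \<omega>) \<and>
        (\<forall>t\<ge>0. ((\<lambda>s. K2 s \<omega>) \<longlongrightarrow> K2 t \<omega>) (at_right t))"
    using c2 unfolding cadlag_increasing_from_0_def by blast
  have K1nn: "\<And>\<omega> s. \<omega> \<in> space M \<Longrightarrow> 0 \<le> s \<Longrightarrow> 0 \<le> K1 s \<omega>"
    using path1 by (metis order_refl)
  have K2nn: "\<And>\<omega> s. \<omega> \<in> space M \<Longrightarrow> 0 \<le> s \<Longrightarrow> 0 \<le> K2 s \<omega>"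
    using path2 by (metis order_refl)
  define A where "A = {x \<in> space M. K1 t1 x < \<Theta>1 x \<and> K2 t2 x < \<Theta>2 x}"
  have Aeq: "{x \<in> space M. hit_time K1 \<Theta>1 x > ereal t1 \<and> hit_time K2 \<Theta>2 x > ereal t2} = A"
  proof -
    { fix x assume x: "x \<in> space M"
      have "hit_time K1 \<Theta>1 x > ereal t1 \<longleftrightarrow> K1 t1 x < \<Theta>1 x"
        by (rule hit_gt) (use path1[OF x] tt in auto)
      moreover have "hit_time K2 \<Theta>2 x > ereal t2 \<longleftrightarrow> K2 t2 x < \<Theta>2 x"
        by (rule hit_gt) (use path2[OF x] tt in auto)
      ultimately have "(hit_time K1 \<Theta>1 x > ereal t1 \<and> hit_time K2 \<Theta>2 x > ereal t2) \<longleftrightarrow>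
          (K1 t1 x < \<Theta>1 x \<and> K2 t2 x < \<Theta>2 x)" by blast }
    then show ?thesis unfolding A_def by blast
  qed
  have AM[measurable]: "A \<in> sets M" unfolding A_def by measurable
  define E0 where "E0 = F_infty M F"
  define E1 where "E1 = {\<Theta>1 -` A \<inter> space M | A. A \<in> sets borel}"
  define E2 where "E2 = {\<Theta>2 -` A \<inter> space M | A. A \<in> sets borel}"
  define Ef where "Ef = (\<lambda>i::nat. if i = 0 then E0 else if i = 1 then E1 else E2)"
  have indE: "indep_sets Ef {0, 1, 2}" using ind unfolding Ef_def E0_def E1_def E2_def .
  have gen_sub: "(\<Union>s\<in>{0..}. sets (F s)) \<subseteq> sets M"
    using sub unfolding subalgebra_def by auto
  have FsE0: "\<And>s. 0 \<le> s \<Longrightarrow> sets (F s) \<subseteq> E0"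
    unfolding E0_def F_infty_def by (auto intro: sigma_sets.Basic)
  have E0M: "E0 \<subseteq> sets M"
    unfolding E0_def F_infty_def by (rule sets.sigma_sets_subset[OF gen_sub])
  have E0P: "E0 \<subseteq> Pow (space M)" using E0M sets.sets_into_space by blast
  have E1M: "E1 \<subseteq> sets M" unfolding E1_def using T1M by (auto dest: measurable_sets)
  have E2M: "E2 \<subseteq> sets M" unfolding E2_def using T2M by (auto dest: measurable_sets)
  have E1P: "E1 \<subseteq> Pow (space M)" unfolding E1_def by auto
  have E2P: "E2 \<subseteq> Pow (space M)" unfolding E2_def by auto
  have isE0: "Int_stable E0"
  proof -
    have "sigma_algebra (space M) E0"
      unfolding E0_def F_infty_def
      by (rule sigma_algebra_sigma_sets) (use gen_sub sets.sets_into_space in blast)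
    then show ?thesis by (rule algebra.Int_stable[OF sigma_algebra.axioms(1)])
  qed
  have isE1: "Int_stable E1"
    unfolding Int_stable_def E1_def by (auto) (metis Int_assoc Int_left_commute Int_absorb vimage_Int sets.Int)
  have isE2: "Int_stable E2"
    unfolding Int_stable_def E2_def by (auto) (metis Int_assoc Int_left_commute Int_absorb vimage_Int sets.Int)
  have isE: "\<And>i. Int_stable (Ef i)" unfolding Ef_def using isE0 isE1 isE2 by auto
  have ind_a: "indep_set (sigma_sets (space M) (E0 \<union> E1)) (sigma_sets (space M) E2)"
  proof -
    have "indep_sets (\<lambda>j. sigma_sets (space M) (\<Union>i\<in>case_bool {0,1} {2} j. Ef i)) UNIV"
    proof (rule indep_sets_collect_sigma)
      have "(\<Union>j\<in>UNIV. case_bool {0,1} {2} j) = ({0,1,2}::nat set)" by (auto simp: UNIV_bool)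
      then show "indep_sets Ef (\<Union>j\<in>UNIV. case_bool {0,1} {2::nat} j)" using indE by simp
      show "disjoint_family_on (case_bool {0,1} {2::nat}) UNIV"
        unfolding disjoint_family_on_def by (auto split: bool.split)
    qed (rule isE)
    moreover have "(\<lambda>j. sigma_sets (space M) (\<Union>i\<in>case_bool {0,1} {2} j. Ef i)) =
        case_bool (sigma_sets (space M) (E0 \<union> E1)) (sigma_sets (space M) E2)"
      by (rule ext) (auto simp: Ef_def split: bool.split)
    ultimately show ?thesis unfolding indep_set_def by simp
  qed
  have ind_b: "indep_set (sigma_sets (space M) E0) (sigma_sets (space M) E1)"
  proof -
    have "indep_sets (\<lambda>j. sigma_sets (space M) (\<Union>i\<in>case_bool {0} {1} j. Ef i)) UNIV"
    proof (rule indep_sets_collect_sigma)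
      have "(\<Union>j\<in>UNIV. case_bool {0} {1} j) = ({0,1}::nat set)" by (auto simp: UNIV_bool)
      then show "indep_sets Ef (\<Union>j\<in>UNIV. case_bool {0} {1::nat} j)"
        using indep_sets_mono_index[OF _ indE, of "{0,1}"] by auto
      show "disjoint_family_on (case_bool {0} {1::nat}) UNIV"
        unfolding disjoint_family_on_def by (auto split: bool.split)
    qed (rule isE)
    moreover have "(\<lambda>j. sigma_sets (space M) (\<Union>i\<in>case_bool {0} {1} j. Ef i)) =
        case_bool (sigma_sets (space M) E0) (sigma_sets (space M) E1)"
      by (rule ext) (auto simp: Ef_def split: bool.split)
    ultimately show ?thesis unfolding indep_set_def by simp
  qed
  define N1 where "N1 = sigma (space M) E0"
  define N2 where "N2 = sigma (space M) (E0 \<union> E1)"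
  have sN1: "sets N1 = sigma_sets (space M) E0" "space N1 = space M"
    unfolding N1_def using E0P by auto
  have sN2: "sets N2 = sigma_sets (space M) (E0 \<union> E1)" "space N2 = space M"
    unfolding N2_def using E0P E1P by auto
  have subN1: "subalgebra M N1" unfolding subalgebra_def sN1 using sets.sigma_sets_subset[OF E0M] by auto
  have subN2: "subalgebra M N2" unfolding subalgebra_def sN2 using sets.sigma_sets_subset[of "E0 \<union> E1"] E0M E1M by auto
  have indN2: "indep_set (sets N2) E2"
    unfolding indep_set_def sN2
    by (rule indep_sets_mono_sets[OF ind_a[unfolded indep_set_def]]) (auto split: bool.split intro: sigma_sets.Basic)
  have indN1: "indep_set (sets N1) E1"
    unfolding indep_set_def sN1
    by (rule indep_sets_mono_sets[OF ind_b[unfolded indep_set_def]]) (auto split: bool.split intro: sigma_sets.Basic)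
  have FN1: "\<And>s. 0 \<le> s \<Longrightarrow> subalgebra N1 (F s)"
    using sub FsE0 unfolding subalgebra_def sN1 by (fastforce intro!: sigma_sets.Basic)
  have FN2: "\<And>s. 0 \<le> s \<Longrightarrow> subalgebra N2 (F s)"
    using sub FsE0 unfolding subalgebra_def sN2 by (fastforce intro!: sigma_sets.Basic)
  have T1N2[measurable]: "\<Theta>1 \<in> borel_measurable N2"
  proof (rule measurableI)
    fix B :: "real set" assume "B \<in> sets borel"
    then have "\<Theta>1 -` B \<inter> space M \<in> E1" unfolding E1_def by auto
    then show "\<Theta>1 -` B \<inter> space N2 \<in> sets N2" unfolding sN2 by (auto intro: sigma_sets.Basic)
  qed auto
  have K1N1[measurable]: "K1 t1 \<in> borel_measurable N1" by (rule measurable_from_subalg[OF FN1 K1F]) (use tt in auto)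
  have K2N1[measurable]: "K2 t2 \<in> borel_measurable N1" by (rule measurable_from_subalg[OF FN1 K2F]) (use tt in auto)
  have K1N2[measurable]: "K1 t1 \<in> borel_measurable N2" by (rule measurable_from_subalg[OF FN2 K1F]) (use tt in auto)
  have K2N2[measurable]: "K2 t2 \<in> borel_measurable N2" by (rule measurable_from_subalg[OF FN2 K2F]) (use tt in auto)
  have key: "(\<integral>\<omega>. (indicator G \<omega> * indicator A \<omega> :: real) \<partial>M) = (\<integral>\<omega>. indicator G \<omega> * exp (- K1 t1 \<omega> - K2 t2 \<omega>) \<partial>M)"
    if G: "G \<in> sets (F t)" for G
  proof -
    have GN1[measurable]: "G \<in> sets N1" using FN1[OF t0] G unfolding subalgebra_def by auto
    have GN2[measurable]: "G \<in> sets N2" using FN2[OF t0] G unfolding subalgebra_def by auto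
    have GM[measurable]: "G \<in> sets M" using sub[OF t0] G unfolding subalgebra_def by auto
    have S1: "{\<omega> \<in> space M. K1 t1 \<omega> < \<Theta>1 \<omega>} \<in> sets N2"
    proof -
      have "{\<omega> \<in> space N2. K1 t1 \<omega> < \<Theta>1 \<omega>} \<in> sets N2" by measurable
      then show ?thesis unfolding sN2 .
    qed
    define g2 where "g2 = (\<lambda>\<omega>. indicator G \<omega> * indicator {\<omega> \<in> space M. K1 t1 \<omega> < \<Theta>1 \<omega>} \<omega> :: real)"
    define g1 where "g1 = (\<lambda>\<omega>. indicator G \<omega> * exp (- K2 t2 \<omega>) :: real)"
    have g2m: "g2 \<in> borel_measurable N2" unfolding g2_def using S1 by measurable
    have g1m: "g1 \<in> borel_measurable N1" unfolding g1_def by measurable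
    have a: "(\<integral>\<^sup>+\<omega>. ennreal (g2 \<omega> * indicator {\<omega> \<in> space M. K2 t2 \<omega> < \<Theta>2 \<omega>} \<omega>) \<partial>M)
       = (\<integral>\<^sup>+\<omega>. ennreal (g2 \<omega> * exp (- K2 t2 \<omega>)) \<partial>M)"
      by (rule indep_exp[OF P subN2 D2 indN2[unfolded E2_def] g2m K2N2])
         (auto simp: g2_def K2nn tt)
    have b: "(\<integral>\<^sup>+\<omega>. ennreal (g1 \<omega> * indicator {\<omega> \<in> space M. K1 t1 \<omega> < \<Theta>1 \<omega>} \<omega>) \<partial>M)
       = (\<integral>\<^sup>+\<omega>. ennreal (g1 \<omega> * exp (- K1 t1 \<omega>)) \<partial>M)"
      by (rule indep_exp[OF P subN1 D1 indN1[unfolded E1_def] g1m K1N1])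
         (auto simp: g1_def K1nn tt)
    have "(\<integral>\<^sup>+\<omega>. ennreal (indicator G \<omega> * indicator A \<omega>) \<partial>M)
        = (\<integral>\<^sup>+\<omega>. ennreal (g2 \<omega> * indicator {\<omega> \<in> space M. K2 t2 \<omega> < \<Theta>2 \<omega>} \<omega>) \<partial>M)"
      by (rule nn_integral_cong) (auto simp: g2_def A_def indicator_def)
    also have "\<dots> = (\<integral>\<^sup>+\<omega>. ennreal (g1 \<omega> * indicator {\<omega> \<in> space M. K1 t1 \<omega> < \<Theta>1 \<omega>} \<omega>) \<partial>M)"
      unfolding a by (rule nn_integral_cong) (auto simp: g2_def g1_def indicator_def)
    also have "\<dots> = (\<integral>\<^sup>+\<omega>. ennreal (indicator G \<omega> * exp (- K1 t1 \<omega> - K2 t2 \<omega>)) \<partial>M)"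
      unfolding b by (rule nn_integral_cong) (auto simp: g1_def indicator_def mult_exp_exp)
    finally have nn: "(\<integral>\<^sup>+\<omega>. ennreal (indicator G \<omega> * indicator A \<omega>) \<partial>M)
        = (\<integral>\<^sup>+\<omega>. ennreal (indicator G \<omega> * exp (- K1 t1 \<omega> - K2 t2 \<omega>)) \<partial>M)" .
    show ?thesis
      by (subst (1 2) integral_eq_nn_integral) (auto simp: nn)
  qed
  have m12: "martingale M F \<eta>12" using MD12 unfolding mult_decomp_def by blast
  have e12F[measurable]: "\<eta>12 t \<in> borel_measurable (F t)" using m12 t0 unfolding martingale_def adapted_def by blast
  have e12I: "integrable M (\<eta>12 t)" using m12 t0 unfolding martingale_def by blast
  have MD12': "mult_decomp M F (\<lambda>s \<omega>. K2 s \<omega> + K1 s \<omega>) \<Lambda>12 \<eta>12"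
  proof -
    have "(\<lambda>s \<omega>. K2 s \<omega> + K1 s \<omega>) = (\<lambda>s \<omega>. K1 s \<omega> + K2 s \<omega>)" by (auto simp: add.commute)
    then show ?thesis using MD12 by simp
  qed
  define R where "R = (\<lambda>\<omega>. if t1 \<le> t2
              then exp (- \<Lambda>2 t2 - (\<Lambda>12 t1 - \<Lambda>2 t1)) * \<eta>12 t \<omega>
              else exp (- \<Lambda>1 t1 - (\<Lambda>12 t2 - \<Lambda>1 t2)) * \<eta>12 t \<omega>)"
  interpret St: sigma_finite_subalgebra M "F t" by (rule sfs[OF P sub[OF t0]])
  have "AE \<omega> in M. real_cond_exp M (F t) (indicator A) \<omega> = R \<omega>"
  proof (rule St.real_cond_exp_charact)
    fix G assume G: "G \<in> sets (F t)"
    have "(\<integral>x\<in>G. (indicator A x :: real) \<partial>M) = (\<integral>\<omega>. (indicator G \<omega> * indicator A \<omega> :: real) \<partial>M)"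
      by (simp add: set_lebesgue_integral_def real_scaleR_def)
    also have "\<dots> = (\<integral>\<omega>. indicator G \<omega> * exp (- K1 t1 \<omega> - K2 t2 \<omega>) \<partial>M)" by (rule key[OF G])
    also have "\<dots> = (\<integral>\<omega>. indicator G \<omega> * R \<omega> \<partial>M)"
    proof (cases "t1 \<le> t2")
      case True
      have "(\<integral>\<omega>. indicator G \<omega> * exp (- K1 t1 \<omega> - K2 t2 \<omega>) \<partial>M)
          = exp (- \<Lambda>2 t2 - (\<Lambda>12 t1 - \<Lambda>2 t1)) * (\<integral>\<omega>. indicator G \<omega> * \<eta>12 t \<omega> \<partial>M)"
        by (rule mart_part[OF P UF K1M(1) K2M(1) K2M(2) _ MD2 MD12 t0 tt(3) True G])
           (use K1nn K2nn tt in auto)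
      also have "\<dots> = (\<integral>\<omega>. indicator G \<omega> * R \<omega> \<partial>M)"
      proof -
        have "(\<lambda>\<omega>. indicator G \<omega> * R \<omega>) = (\<lambda>\<omega>. exp (- \<Lambda>2 t2 - (\<Lambda>12 t1 - \<Lambda>2 t1)) * (indicator G \<omega> * \<eta>12 t \<omega>))"
          using True by (intro ext) (simp add: R_def algebra_simps)
        then show ?thesis by simp
      qed
      finally show ?thesis .
    next
      case False
      have "(\<integral>\<omega>. indicator G \<omega> * exp (- K2 t2 \<omega> - K1 t1 \<omega>) \<partial>M)
          = exp (- \<Lambda>1 t1 - (\<Lambda>12 t2 - \<Lambda>1 t2)) * (\<integral>\<omega>. indicator G \<omega> * \<eta>12 t \<omega> \<partial>M)"
        by (rule mart_part[OF P UF K2M(2) K1M(2) K1M(1) _ MD1 MD12' t0 tt(4) _ G])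
           (use K1nn K2nn tt False in auto)
      also have "\<dots> = (\<integral>\<omega>. indicator G \<omega> * R \<omega> \<partial>M)"
      proof -
        have "(\<lambda>\<omega>. indicator G \<omega> * R \<omega>) = (\<lambda>\<omega>. exp (- \<Lambda>1 t1 - (\<Lambda>12 t2 - \<Lambda>1 t2)) * (indicator G \<omega> * \<eta>12 t \<omega>))"
          using False by (intro ext) (simp add: R_def algebra_simps)
        then show ?thesis by simp
      qed
      finally have fin: "(\<integral>\<omega>. indicator G \<omega> * exp (- K2 t2 \<omega> - K1 t1 \<omega>) \<partial>M) = (\<integral>\<omega>. indicator G \<omega> * R \<omega> \<partial>M)" .
      have "(\<lambda>\<omega>. indicator G \<omega> * exp (- K2 t2 \<omega> - K1 t1 \<omega>)) = (\<lambda>\<omega>. indicator G \<omega> * exp (- K1 t1 \<omega> - K2 t2 \<omega>) :: real)"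
        by (intro ext) (simp add: algebra_simps)
      with fin show ?thesis by simp
    qed
    also have "\<dots> = (\<integral>x\<in>G. R x \<partial>M)"
      by (simp add: set_lebesgue_integral_def real_scaleR_def)
    finally show "(\<integral>x\<in>G. (indicator A x :: real) \<partial>M) = (\<integral>x\<in>G. R x \<partial>M)" .
  next
    show "integrable M (indicator A :: 'a \<Rightarrow> real)"
      by (rule integrable_real_indicator) (auto simp: less_top[symmetric])
    show "integrable M R" unfolding R_def using e12I by (cases "t1 \<le> t2") (simp_all add: integrable_mult_right)
    show "R \<in> borel_measurable (F t)" unfolding R_def by measurable
  qed
  then show ?thesis unfolding Aeq R_def .
qed

end
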